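(* Let $n,m\ge 1$, $V_{th}>0$, $\Delta t_d>0$, $\mathbf{W}\in\mathbb{R}^{n\times n}$, $\mathbf{F}\in\mathbb{R}^{n\times m}$, $\mathbf{b}\in\mathbb{R}^n$. Consider a feedback spiking neural network of $n$ neurons with the continuous integrate-and-fire (IF) model, whose membrane potentials $\mathbf{u}(t)\in\mathbb{R}^n$ evolve as $$\frac{\mathrm{d}\mathbf{u}}{\mathrm{d}t}=\mathbf{W}\mathbf{s}(t-\Delta t_d)+\mathbf{F}\mathbf{x}(t)+\mathbf{b}-V_{th}\mathbf{s}(t),$$ where $\mathbf{x}(t)\in\mathbb{R}^m$ is the input and $\mathbf{s}(t)$ is the vector of output spike trains (sums of Dirac deltas at the times a neuron's potential reaches $V_{th}$, after which it is reduced by $V_{th}$). Let $\mathbf{a}(t)=\frac1t\int_0^t\mathbf{s}(\tau)\,\mathrm{d}\tau$ be the average firing rates and $\overline{\mathbf{x}}(t)=\frac1t\int_0^t\mathbf{x}(\tau)\,\mathrm{d}\tau$ the average inputs. Let $\mathbf{u}^+(t)\in\mathbb{R}^n$ denote the (positive) part of the membrane potential for which $$\mathbf{a}(t)=\mathrm{ReLU}\!\left(\frac{1}{V_{th}}\left(\frac{t-\Delta t_d}{t}\mathbf{W}\mathbf{a}(t-\Delta t_d)+\mathbf{F}\overline{\mathbf{x}}(t)+\mathbf{b}-\frac{\mathbf{u}^+(t)}{t}\right)\right)$$ holds. Suppose that $\overline{\mathbf{x}}(t)\to\mathbf{x}^*$ as $t\to\infty$, and that there exist constants $c$ and $\gamma<1$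 such that $|\mathbf{u}^+_i(t)|\le c$ for all $i,t$ and $\|\mathbf{W}\|_2\le\gamma V_{th}$. Then $\mathbf{a}(t)$ converges as $t\to\infty$ to a point $\mathbf{a}^*$ satisfying $$\mathbf{a}^*=\mathrm{ReLU}\!\left(\frac{1}{V_{th}}\left(\mathbf{W}\mathbf{a}^*+\mathbf{F}\mathbf{x}^*+\mathbf{b}\right)\right).$$
   Context: $\mathrm{ReLU}(x)=\max(x,0)$ applied elementwise; $\|\cdot\|_2$ is the spectral (operator 2-) norm. In the paper the membrane potential is decomposed as $\mathbf{u}_i(t)=\mathbf{u}^-_i(t)+\mathbf{u}^+_i(t)$, where $\frac1t\mathbf{u}^-_i(t)=\min(v_i(t),0)$ with $v(t)=\frac{t-\Delta t_d}{t}\mathbf{W}\mathbf{a}(t-\Delta t_d)+\mathbf{F}\overline{\mathbf{x}}(t)+\mathbf{b}$ is the accumulated negative term, and $\mathbf{u}^+(t)$ is the remainder; with this decomposition the displayed ReLU relation for $\mathbf{a}(t)$ holds. *)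

theory Defs
  imports "HOL-Analysis.Analysis"
begin

definition relu :: "real^'n \<Rightarrow> real^'n" where
  "relu v = (\<chi> i. max (v $ i) 0)"

text \<open>Spike trains: neuron i emits a Dirac delta at each time in spk i (all times \<ge> 0).
  The integral of s_i over [0,t] is the number of spikes in [0,t], so the average
  firing rate is a_i(t) = card (spk i \<inter> {0..t}) / t  (which is 0 for t \<le> 0,
  matching s = 0 before time 0).\<close>
definition avg_rate :: "('n \<Rightarrow> real set) \<Rightarrow> real \<Rightarrow> real^'n" where
  "avg_rate spk t = (\<chi> i. real (card (spk i \<inter> {0..t})) / t)"

definition avg_input :: "(real \<Rightarrow> real^'m) \<Rightarrow> real \<Rightarrow> real^'m" where
  "avg_input x t = (1 / t) *\<^sub>R integral {0..t} x"

end

theory Submission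
  imports Defs
begin

lemma relu_lip: "norm (relu u - relu v) \<le> norm (u - v)"
  by (rule norm_le_componentwise_cart) (simp add: relu_def)

lemma key_ineq:
  fixes Vth dtd \<gamma> t :: real and W :: "real^'n^'n" and F :: "real^'m^'n"
    and a' astar u :: "real^'n" and xb xstar :: "real^'m" and b :: "real^'n"
  assumes V: "Vth > 0" and d: "dtd > 0" and t: "t \<ge> dtd"
    and W_norm: "onorm (\<lambda>v. W *v v) \<le> \<gamma> * Vth"
  shows "norm (relu ((1 / Vth) *\<^sub>R (((t - dtd) / t) *\<^sub>R (W *v a') + F *v xb + b - (1 / t) *\<^sub>R u))
            - relu ((1 / Vth) *\<^sub>R (W *v astar + F *v xstar + b)))
       \<le> \<gamma> * norm (a' - astar) + (dtd / t) * \<gamma> * norm astar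
         + onorm (\<lambda>v. F *v v) * dist xb xstar / Vth + norm u / (t * Vth)"
proof -
  have tpos: "t > 0" using t d by linarith
  define s where "s = (t - dtd) / t"
  have s0: "0 \<le> s" and s1: "s \<le> 1" using t tpos d by (auto simp: s_def field_simps)
  have s1': "1 - s = dtd / t" using tpos by (simp add: s_def field_simps)
  have g0: "0 \<le> \<gamma> * Vth" using W_norm onorm_pos_le[OF matrix_vector_mul_bounded_linear[of W]] by linarith
  have eq: "(1 / Vth) *\<^sub>R (s *\<^sub>R (W *v a') + F *v xb + b - (1 / t) *\<^sub>R u)
            - (1 / Vth) *\<^sub>R (W *v astar + F *v xstar + b)
     = (1 / Vth) *\<^sub>R (s *\<^sub>R (W *v (a' - astar)) - (1 - s) *\<^sub>R (W *v astar) + F *v (xb - xstar) - (1 / t) *\<^sub>R u)"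
    by (simp add: algebra_simps)
  have "norm (s *\<^sub>R (W *v (a' - astar)) - (1 - s) *\<^sub>R (W *v astar) + F *v (xb - xstar) - (1 / t) *\<^sub>R u)
      \<le> norm (s *\<^sub>R (W *v (a' - astar))) + norm ((1 - s) *\<^sub>R (W *v astar)) + norm (F *v (xb - xstar)) + norm ((1 / t) *\<^sub>R u)"
    by (smt (verit) norm_triangle_ineq4 norm_triangle_ineq)
  also have "\<dots> = s * norm (W *v (a' - astar)) + (dtd / t) * norm (W *v astar) + norm (F *v (xb - xstar)) + norm u / t"
    using s0 s1 s1' tpos d by simp
  also have "\<dots> \<le> s * (\<gamma> * Vth * norm (a' - astar)) + (dtd / t) * (\<gamma> * Vth * norm astar)
        + onorm (\<lambda>v. F *v v) * dist xb xstar + norm u / t"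
  proof -
    have 1: "norm (W *v (a' - astar)) \<le> \<gamma> * Vth * norm (a' - astar)"
      using onorm[OF matrix_vector_mul_bounded_linear[of W], of "a' - astar"] W_norm
      by (meson mult_right_mono norm_ge_zero order_trans)
    have 2: "norm (W *v astar) \<le> \<gamma> * Vth * norm astar"
      using onorm[OF matrix_vector_mul_bounded_linear[of W], of "astar"] W_norm
      by (meson mult_right_mono norm_ge_zero order_trans)
    have 3: "norm (F *v (xb - xstar)) \<le> onorm (\<lambda>v. F *v v) * dist xb xstar"
      using onorm[OF matrix_vector_mul_bounded_linear[of F], of "xb - xstar"] by (simp add: dist_norm)
    have "s * norm (W *v (a' - astar)) \<le> s * (\<gamma> * Vth * norm (a' - astar))"
      using 1 s0 by (rule mult_left_mono)
    moreover have "(dtd / t) * norm (W *v astar) \<le> (dtd / t) * (\<gamma> * Vth * norm astar)"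
      using 2 d tpos by (intro mult_left_mono) auto
    ultimately show ?thesis using 3 by linarith
  qed
  also have "\<dots> \<le> \<gamma> * Vth * norm (a' - astar) + (dtd / t) * (\<gamma> * Vth * norm astar)
        + onorm (\<lambda>v. F *v v) * dist xb xstar + norm u / t"
    using s1 s0 g0 mult_left_le_one_le[of "\<gamma> * Vth * norm (a' - astar)" s] by simp
  finally have A: "norm (s *\<^sub>R (W *v (a' - astar)) - (1 - s) *\<^sub>R (W *v astar) + F *v (xb - xstar) - (1 / t) *\<^sub>R u)
     \<le> \<gamma> * Vth * norm (a' - astar) + (dtd / t) * (\<gamma> * Vth * norm astar)
        + onorm (\<lambda>v. F *v v) * dist xb xstar + norm u / t" .
  have "norm (relu ((1 / Vth) *\<^sub>R (s *\<^sub>R (W *v a') + F *v xb + b - (1 / t) *\<^sub>R u))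
            - relu ((1 / Vth) *\<^sub>R (W *v astar + F *v xstar + b)))
     \<le> norm ((1 / Vth) *\<^sub>R (s *\<^sub>R (W *v (a' - astar)) - (1 - s) *\<^sub>R (W *v astar) + F *v (xb - xstar) - (1 / t) *\<^sub>R u))"
    using relu_lip eq by metis
  also have "\<dots> = (1 / Vth) * norm (s *\<^sub>R (W *v (a' - astar)) - (1 - s) *\<^sub>R (W *v astar) + F *v (xb - xstar) - (1 / t) *\<^sub>R u)"
    using V by simp
  also have "\<dots> \<le> (1 / Vth) * (\<gamma> * Vth * norm (a' - astar) + (dtd / t) * (\<gamma> * Vth * norm astar)
        + onorm (\<lambda>v. F *v v) * dist xb xstar + norm u / t)"
    using A V by (intro mult_left_mono) auto
  also have "\<dots> = \<gamma> * norm (a' - astar) + (dtd / t) * \<gamma> * norm astar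
         + onorm (\<lambda>v. F *v v) * dist xb xstar / Vth + norm u / (t * Vth)"
    using V by (simp add: field_simps)
  finally show ?thesis by (simp add: s_def)
qed

theorem theorem1:
  fixes Vth dtd c \<gamma> :: real
    and W :: "real^'n^'n" and F :: "real^'m^'n" and b :: "real^'n"
    and x :: "real \<Rightarrow> real^'m" and xstar :: "real^'m"
    and spk :: "'n \<Rightarrow> real set" and up :: "real \<Rightarrow> real^'n"
  assumes Vth_pos: "Vth > 0"
    and dtd_pos: "dtd > 0"
    and x_int: "\<And>t. t \<ge> 0 \<Longrightarrow> x integrable_on {0..t}"
    and spk_nonneg: "\<And>i. spk i \<subseteq> {0..}"
    and spk_fin: "\<And>i t. finite (spk i \<inter> {0..t})"
    and relation: "\<And>t. t > 0 \<Longrightarrow>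
       avg_rate spk t = relu ((1 / Vth) *\<^sub>R
          (((t - dtd) / t) *\<^sub>R (W *v avg_rate spk (t - dtd))
           + F *v avg_input x t + b - (1 / t) *\<^sub>R up t))"
    and xbar_lim: "(avg_input x \<longlongrightarrow> xstar) at_top"
    and up_bound: "\<And>i t. \<bar>up t $ i\<bar> \<le> c"
    and gamma_lt: "\<gamma> < 1"
    and W_norm: "onorm (\<lambda>v. W *v v) \<le> \<gamma> * Vth"
  shows "\<exists>astar. (avg_rate spk \<longlongrightarrow> astar) at_top \<and>
           astar = relu ((1 / Vth) *\<^sub>R (W *v astar + F *v xstar + b))"
proof -
  define a where "a = avg_rate spk"
  define xb where "xb = avg_input x"
  have g0: "0 \<le> \<gamma>"
  proof -
    have "0 \<le> \<gamma> * Vth" using W_norm onorm_pos_le[OF matrix_vector_mul_bounded_linear[of W]] by linarith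
    thus ?thesis using Vth_pos by (simp add: zero_le_mult_iff)
  qed
  have c0: "0 \<le> c" using up_bound[of 0 undefined] by linarith
  define Tm where "Tm v = relu ((1 / Vth) *\<^sub>R (W *v v + F *v xstar + b))" for v
  have contr: "\<forall>u v. dist (Tm u) (Tm v) \<le> \<gamma> * dist u v"
  proof (intro allI)
    fix u v
    have "dist (Tm u) (Tm v) \<le> norm ((1 / Vth) *\<^sub>R (W *v u + F *v xstar + b) - (1 / Vth) *\<^sub>R (W *v v + F *v xstar + b))"
      unfolding Tm_def dist_norm by (rule relu_lip)
    also have "\<dots> = norm ((1 / Vth) *\<^sub>R (W *v (u - v)))"
      by (simp add: algebra_simps)
    also have "\<dots> = (1 / Vth) * norm (W *v (u - v))"
      using Vth_pos by simp
    also have "\<dots> \<le> (1 / Vth) * (\<gamma> * Vth * norm (u - v))"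
      using onorm[OF matrix_vector_mul_bounded_linear[of W], of "u - v"] W_norm Vth_pos
      by (intro mult_left_mono) (meson mult_right_mono norm_ge_zero order_trans, simp)
    also have "\<dots> = \<gamma> * dist u v" using Vth_pos by (simp add: dist_norm)
    finally show "dist (Tm u) (Tm v) \<le> \<gamma> * dist u v" .
  qed
  obtain astar where fixp: "Tm astar = astar"
    using banach_fix_type[OF g0 gamma_lt contr] by blast
  have fx: "relu ((1 / Vth) *\<^sub>R (W *v astar + F *v xstar + b)) = astar"
    using fixp by (simp only: Tm_def)
  define R where "R t = (dtd / t) * \<gamma> * norm astar
         + onorm (\<lambda>v. F *v v) * dist (xb t) xstar / Vth + real CARD('n) * c / (t * Vth)" for t
  have step: "norm (a t - astar) \<le> \<gamma> * norm (a (t - dtd) - astar) + R t" if t: "t \<ge> dtd" for t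
  proof -
    have tpos: "t > 0" using t dtd_pos by linarith
    have nu: "norm (up t) \<le> real CARD('n) * c"
    proof -
      have "norm (up t) \<le> (\<Sum>i\<in>UNIV. \<bar>up t $ i\<bar>)" by (rule norm_le_l1_cart)
      also have "\<dots> \<le> (\<Sum>i\<in>(UNIV::'n set). c)" by (intro sum_mono up_bound)
      finally show ?thesis by simp
    qed
    have eqa: "a t = relu ((1 / Vth) *\<^sub>R
          (((t - dtd) / t) *\<^sub>R (W *v a (t - dtd)) + F *v xb t + b - (1 / t) *\<^sub>R up t))"
      using relation[OF tpos] unfolding a_def xb_def .
    note K = key_ineq[OF Vth_pos dtd_pos t W_norm, where a'="a (t - dtd)" and xb="xb t" and b=b and u="up t" and astar=astar and xstar=xstar and F=F]
    have "norm (a t - astar) \<le> \<gamma> * norm (a (t - dtd) - astar) + (dtd / t) * \<gamma> * norm astar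
         + onorm (\<lambda>v. F *v v) * dist (xb t) xstar / Vth + norm (up t) / (t * Vth)"
      by (subst eqa) (rule K[unfolded fx])
    also have "norm (up t) / (t * Vth) \<le> real CARD('n) * c / (t * Vth)"
      using nu tpos Vth_pos by (intro divide_right_mono) auto
    finally show ?thesis unfolding R_def by linarith
  qed
  have Rlim: "(R \<longlongrightarrow> 0) at_top"
  proof -
    have inf: "LIM t at_top. (t::real) :> at_infinity"
      by (rule filterlim_at_top_imp_at_infinity[OF filterlim_ident])
    have 1: "((\<lambda>t. dtd / t) \<longlongrightarrow> 0) at_top" by (rule tendsto_divide_0[OF tendsto_const inf])
    have 2: "((\<lambda>t. real CARD('n) * c / t) \<longlongrightarrow> 0) at_top" by (rule tendsto_divide_0[OF tendsto_const inf])
    have 3: "((\<lambda>t. dist (xb t) xstar) \<longlongrightarrow> 0) at_top"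
      using tendsto_dist_iff[THEN iffD1, OF xbar_lim] unfolding xb_def .
    have "((\<lambda>t. (dtd / t) * \<gamma> * norm astar
         + onorm (\<lambda>v. F *v v) * dist (xb t) xstar / Vth + (real CARD('n) * c / t) / Vth) \<longlongrightarrow>
          0 * \<gamma> * norm astar + onorm (\<lambda>v. F *v v) * 0 / Vth + 0 / Vth) at_top"
      using Vth_pos by (intro tendsto_intros 1 2 3) auto
    moreover have "(\<lambda>t. (dtd / t) * \<gamma> * norm astar
         + onorm (\<lambda>v. F *v v) * dist (xb t) xstar / Vth + (real CARD('n) * c / t) / Vth) = R"
      unfolding R_def by (auto simp: fun_eq_iff)
    ultimately show ?thesis by simp
  qed
  have conv: "(a \<longlongrightarrow> astar) at_top"
  proof (rule tendstoI)
    fix \<epsilon> :: real assume eps: "\<epsilon> > 0"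
    define \<eta> where "\<eta> = \<epsilon> / 2"
    have eta: "\<eta> > 0" using eps by (simp add: \<eta>_def)
    have "\<eta> * (1 - \<gamma>) > 0" using eta gamma_lt by simp
    from order_tendstoD(2)[OF Rlim this] obtain T1 where T1: "\<And>t. t \<ge> T1 \<Longrightarrow> R t < \<eta> * (1 - \<gamma>)"
      by (auto simp: eventually_at_top_linorder)
    define T0 where "T0 = max T1 dtd"
    define B where "B = (\<Sum>i\<in>UNIV. real (card (spk i \<inter> {0..T0 + dtd})) / dtd) + norm astar"
    have B0: "B \<ge> 0" unfolding B_def using dtd_pos by (intro add_nonneg_nonneg sum_nonneg) auto
    have bnd: "norm (a t - astar) \<le> B" if "T0 \<le> t" "t \<le> T0 + dtd" for t
    proof -
      have tpos: "t \<ge> dtd" using that T0_def by auto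
      have "norm (a t - astar) \<le> norm (a t) + norm astar" by (rule norm_triangle_ineq4)
      also have "norm (a t) \<le> (\<Sum>i\<in>UNIV. \<bar>a t $ i\<bar>)" by (rule norm_le_l1_cart)
      also have "\<dots> \<le> (\<Sum>i\<in>UNIV. real (card (spk i \<inter> {0..T0 + dtd})) / dtd)"
      proof (rule sum_mono)
        fix i
        have "card (spk i \<inter> {0..t}) \<le> card (spk i \<inter> {0..T0 + dtd})"
          using that by (intro card_mono spk_fin) auto
        hence "real (card (spk i \<inter> {0..t})) / t \<le> real (card (spk i \<inter> {0..T0 + dtd})) / t"
          using tpos dtd_pos by (intro divide_right_mono) auto
        also have "\<dots> \<le> real (card (spk i \<inter> {0..T0 + dtd})) / dtd"
          using tpos dtd_pos by (intro divide_left_mono) auto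
        finally show "\<bar>a t $ i\<bar> \<le> real (card (spk i \<inter> {0..T0 + dtd})) / dtd"
          using tpos dtd_pos by (simp add: a_def avg_rate_def)
      qed
      finally show ?thesis unfolding B_def by simp
    qed
    have ind: "\<forall>t. T0 + real k * dtd \<le> t \<and> t \<le> T0 + real (Suc k) * dtd \<longrightarrow>
                 norm (a t - astar) \<le> \<gamma> ^ k * B + \<eta>" for k
    proof (induction k)
      case 0
      then show ?case using bnd eta by fastforce
    next
      case (Suc k)
      show ?case
      proof (intro allI impI)
        fix t assume t: "T0 + real (Suc k) * dtd \<le> t \<and> t \<le> T0 + real (Suc (Suc k)) * dtd"
        have td: "t \<ge> dtd" and tT1: "t \<ge> T1" using t T0_def dtd_pos
          by (auto simp: algebra_simps) (smt (verit) mult_nonneg_nonneg of_nat_0_le_iff)+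
        have ih: "norm (a (t - dtd) - astar) \<le> \<gamma> ^ k * B + \<eta>"
          using Suc.IH t by (auto simp: algebra_simps)
        have "norm (a t - astar) \<le> \<gamma> * norm (a (t - dtd) - astar) + R t" by (rule step[OF td])
        also have "\<dots> \<le> \<gamma> * (\<gamma> ^ k * B + \<eta>) + \<eta> * (1 - \<gamma>)"
          using ih T1[OF tT1] g0 by (smt (verit) mult_left_mono)
        also have "\<dots> = \<gamma> ^ Suc k * B + \<eta>" by (simp add: algebra_simps)
        finally show "norm (a t - astar) \<le> \<gamma> ^ Suc k * B + \<eta>" .
      qed
    qed
    obtain K where K: "\<gamma> ^ K < \<eta> / (B + 1)"
      using real_arch_pow_inv[of "\<eta> / (B + 1)" \<gamma>] eta B0 gamma_lt by auto
    have KB: "\<gamma> ^ k * B < \<eta>" if "k \<ge> K" for k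
    proof -
      have "\<gamma> ^ k \<le> \<gamma> ^ K" using that g0 gamma_lt by (intro power_decreasing) auto
      hence "\<gamma> ^ k * B \<le> \<gamma> ^ K * (B + 1)" using B0 g0
        by (smt (verit) mult_left_mono mult_right_mono zero_le_power)
      also have "\<dots> < \<eta>" using K B0 by (simp add: pos_less_divide_eq)
      finally show ?thesis .
    qed
    show "\<forall>\<^sub>F t in at_top. dist (a t) astar < \<epsilon>"
      unfolding eventually_at_top_linorder
    proof (intro exI allI impI)
      fix t assume t: "t \<ge> T0 + real K * dtd"
      define k where "k = nat \<lfloor>(t - T0) / dtd\<rfloor>"
      have q0: "(t - T0) / dtd \<ge> real K" using t dtd_pos by (simp add: field_simps)
      have fK: "int K \<le> \<lfloor>(t - T0) / dtd\<rfloor>" using q0 by (simp add: le_floor_iff)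
      hence kk: "real k = of_int \<lfloor>(t - T0) / dtd\<rfloor>" unfolding k_def by simp
      have kK: "k \<ge> K" unfolding k_def using fK by linarith
      have lo: "real k \<le> (t - T0) / dtd" using kk by linarith
      have hi: "(t - T0) / dtd < real k + 1" using kk by linarith
      have "T0 + real k * dtd \<le> t" using lo dtd_pos by (simp add: field_simps)
      moreover have "t \<le> T0 + real (Suc k) * dtd" using hi dtd_pos by (simp add: field_simps)
      ultimately have "norm (a t - astar) \<le> \<gamma> ^ k * B + \<eta>" using ind by blast
      thus "dist (a t) astar < \<epsilon>" using KB[OF kK] by (simp add: dist_norm \<eta>_def)
    qed
  qed
  show ?thesis
    using conv fx[symmetric] unfolding a_def by blast
qed

end
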